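(* Let $\mu\in\mathbb R\setminus\{0\}$ and $r=\frac{\mu}{e^{\mu}-1}$. Then for all $x\in[0,1]$, $$1-e^{-\mu x}\le\left(1-e^{-\mu}\right)x^{r}.$$
   Context: Here $x^r$ at $x=0$ is interpreted as $0$ (note $r>0$). *)

theory Defs
  imports Complex_Main
begin

end

theory Submission
  imports Defs "HOL-Analysis.Analysis"
begin

lemma cvx: fixes \<mu> x :: real assumes "0 \<le> x" "x \<le> 1"
  shows "exp (\<mu> * x) - 1 \<le> x * (exp \<mu> - 1)"
proof -
  have "exp ((1-x)*0 + x*\<mu>) \<le> (1-x)*exp 0 + x * exp \<mu>"
    using convex_onD[OF exp_convex, of x 0 \<mu>] assms by simp
  then show ?thesis by (simp add: algebra_simps)
qed

theorem mainTheorem4: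
  fixes \<mu> x :: real
  assumes "\<mu> \<noteq> 0"
    and "0 \<le> x" and "x \<le> 1"
  shows "1 - exp (- \<mu> * x) \<le> (1 - exp (- \<mu>)) * x powr (\<mu> / (exp \<mu> - 1))"
proof (cases "x = 0")
  case True
  then show ?thesis by simp
next
  case False
  hence xp: "0 < x" using assms by simp
  define r where "r = \<mu> / (exp \<mu> - 1)"
  have q: "0 < (exp \<mu> - 1) / \<mu>"
  proof (cases "\<mu> > 0")
    case True then show ?thesis by (simp add: divide_pos_pos)
  next
    case False then have "\<mu> < 0" using assms by simp
    then show ?thesis by (simp add: divide_neg_neg)
  qed
  have rpos: "r > 0" unfolding r_def using q by (simp add: zero_less_divide_iff)
  define \<phi> where "\<phi> t = (1 - exp (- \<mu> * t)) * t powr (- r)" for t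
  have key: "\<phi> x \<le> \<phi> 1"
  proof (rule DERIV_nonneg_imp_nondecreasing[OF assms(3)])
    fix t assume t: "x \<le> t" "t \<le> 1"
    hence tp: "0 < t" using xp by simp
    have d: "(\<phi> has_real_derivative
       (\<mu> * exp (- \<mu> * t) * t powr (- r) + (1 - exp (- \<mu> * t)) * (- r * t powr (- r - 1)))) (at t)"
      unfolding \<phi>_def using tp
      by (auto intro!: derivative_eq_intros)
    have e: "t powr (- r - 1) = t powr (- r) / t" using tp
      by (simp add: powr_diff)
    have c: "exp (\<mu> * t) - 1 \<le> t * (exp \<mu> - 1)" using cvx t tp by simp
    have "0 \<le> \<mu> * exp (- \<mu> * t) - r * (1 - exp (- \<mu> * t)) / t"
    proof -
      have "0 \<le> (t * (exp \<mu> - 1) - (exp (\<mu> * t) - 1)) * exp (- \<mu> * t)" using c by simp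
      hence "0 \<le> (t * (exp \<mu> - 1) * exp (- \<mu> * t) - (1 - exp (- \<mu> * t)))"
        by (simp add: algebra_simps exp_minus_inverse mult_exp_exp)
      hence "0 \<le> (t * (exp \<mu> - 1) * exp (- \<mu> * t) - (1 - exp (- \<mu> * t))) / ((exp \<mu> - 1) / \<mu>) / t"
        using q tp by (intro divide_nonneg_pos) auto
      also have "\<dots> = \<mu> * exp (- \<mu> * t) - r * (1 - exp (- \<mu> * t)) / t"
        unfolding r_def using tp assms(1) q by (auto simp: field_simps)
      finally show ?thesis .
    qed
    hence "0 \<le> t powr (- r) * (\<mu> * exp (- \<mu> * t) - r * (1 - exp (- \<mu> * t)) / t)"
      by simp
    also have "\<dots> = \<mu> * exp (- \<mu> * t) * t powr (- r) + (1 - exp (- \<mu> * t)) * (- r * t powr (- r - 1))"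
      unfolding e by (simp add: algebra_simps)
    finally show "\<exists>y. (\<phi> has_real_derivative y) (at t) \<and> 0 \<le> y" using d by blast
  qed
  have "x powr (- r) * x powr r = 1" using xp by (simp add: powr_add[symmetric])
  have "1 - exp (- \<mu> * x) = \<phi> x * x powr r"
    unfolding \<phi>_def using xp by (simp add: powr_add[symmetric])
  also have "\<dots> \<le> \<phi> 1 * x powr r" using key by (simp add: mult_right_mono)
  also have "\<dots> = (1 - exp (- \<mu>)) * x powr r" unfolding \<phi>_def by simp
  finally show ?thesis unfolding r_def .
qed

end
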